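(* Let $\xi\ge 0$. For every set $E\subset\mathbb{R}_+$, $$\mathrm{Dim}_H E=\inf\Big\{\rho>0:\ \sum_{n\ge -1}\widetilde{\nu}^n_{\rho,\xi}(E)<+\infty\Big\},$$ where for $\rho>0$ and $n\ge -1$, $$\widetilde{\nu}^n_{\rho,\xi}(E)=\inf\Big\{\sum_{i=1}^m\Big(\frac{\mathrm{diam}(I_i)}{2^n}\Big)^\rho\Big|\log_2\frac{\mathrm{diam}(I_i)}{2^n}\Big|^\xi:\ \{I_i\}_{i=1}^m\in\mathcal{I}_n(E)\Big\}.$$
   Context: Let $S_{-1}=[0,1/2)$ and $S_n=[2^{n-1},2^n)$ for $n\ge 0$. For $E\subset\mathbb{R}_+$ and $n\ge -1$, $\mathcal{I}_n(E)$ is the set of finite families $\{I_i\}_{i=1}^m$ of intervals $I_i=[x_i,y_i]$ with $x_i,y_i\in\mathbb{N}$, $y_i>x_i$, $I_i\subset S_n$, and $E\cap S_n\subset\bigcup_i I_i$; $\mathrm{diam}([a,b])=b-a$. For $\rho\ge0$, $\nu^n_\rho(E)=\inf\{\sum_{i=1}^m (\mathrm{diam}(I_i)/2^n)^\rho : \{I_i\}\in\mathcal{I}_n(E)\}$, and the macroscopic Hausdorff dimension is $\mathrm{Dim}_H E=\inf\{\rho>0:\sum_{n\ge-1}\nu^n_\rho(E)<\infty\}$. *)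

theory Defs
  imports "HOL-Analysis.Analysis"
begin

definition shell :: "int \<Rightarrow> real set" where
  "shell n = (if n = -1 then {0..<1/2} else {2 powr (real_of_int n - 1)..<2 powr (real_of_int n)})"

text \<open>I_n(E): finite families of integer-endpoint intervals [x,y] (x<y), contained in S(n),
  covering E \<inter> S(n). A family is encoded as a finite set of endpoint pairs.\<close>
definition covers :: "int \<Rightarrow> real set \<Rightarrow> (nat \<times> nat) set set" where
  "covers n E = {F. finite F \<and> (\<forall>(x,y)\<in>F. x < y \<and> {real x..real y} \<subseteq> shell n)
      \<and> E \<inter> shell n \<subseteq> (\<Union>(x,y)\<in>F. {real x..real y})}"

text \<open>nu^n_rho(E); the infimum over an empty family of covers is +infinity.\<close>
definition nu :: "int \<Rightarrow> real \<Rightarrow> real set \<Rightarrow> ennreal" where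
  "nu n \<rho> E = (INF F\<in>covers n E.
      ennreal (\<Sum>(x,y)\<in>F. ((real y - real x) / 2 powr real_of_int n) powr \<rho>))"

definition nu_log :: "int \<Rightarrow> real \<Rightarrow> real \<Rightarrow> real set \<Rightarrow> ennreal" where
  "nu_log n \<rho> \<xi> E = (INF F\<in>covers n E.
      ennreal (\<Sum>(x,y)\<in>F. ((real y - real x) / 2 powr real_of_int n) powr \<rho>
                 * \<bar>log 2 ((real y - real x) / 2 powr real_of_int n)\<bar> powr \<xi>))"

text \<open>Macroscopic Hausdorff dimension; sums over n >= -1 are indexed by k = n+1.
  Infimum of the empty set is +infinity (in ereal).\<close>
definition macro_dimH :: "real set \<Rightarrow> ereal" where
  "macro_dimH E = Inf {ereal \<rho> | \<rho>. \<rho> > 0 \<and> (\<Sum>k. nu (int k - 1) \<rho> E) < \<infinity>}"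

end

theory Submission
  imports Defs
begin

lemma ennreal_mult_INF_aux:
  fixes c :: ennreal and g :: "'a \<Rightarrow> ennreal"
  assumes "c < top" "S \<noteq> {}"
  shows "c * (INF x\<in>S. g x) = (INF x\<in>S. c * g x)"
proof -
  have "(\<lambda>x. c * x) (Inf (g ` S)) = Inf ((\<lambda>x. c * x) ` (g ` S))"
  proof (rule continuous_at_Inf_mono)
    show "mono ((*) c)" by (simp add: mono_def mult_left_mono)
    show "continuous (at_right (Inf (g ` S))) ((*) c)"
      using ennreal_continuous_on_cmult[OF assms(1) continuous_on_id, of UNIV]
      by (simp add: continuous_on_eq_continuous_at continuous_at_imp_continuous_at_within)
    show "g ` S \<noteq> {}" using assms by auto
    show "bdd_below (g ` S)" by simp
  qed
  then show ?thesis by (simp add: image_image)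
qed

lemma log_factor_bound:
  fixes r \<epsilon> \<xi> :: real
  assumes r: "0 < r" "r \<le> 1" and e: "\<epsilon> > 0" and xi: "\<xi> \<ge> 0"
  shows "r powr \<epsilon> * \<bar>log 2 r\<bar> powr \<xi> \<le> (1 / ((\<epsilon> / (\<xi> + 1)) * ln 2)) powr \<xi>"
proof -
  define d where "d = \<epsilon> / (\<xi> + 1)"
  define K where "K = 1 / (d * ln 2)"
  have d: "d > 0" using e xi by (simp add: d_def)
  have K: "K > 0" using d by (simp add: K_def)
  define t where "t = 1 / r"
  have t: "t \<ge> 1" using r by (simp add: t_def)
  have "\<bar>log 2 r\<bar> = log 2 t" using r t by (simp add: t_def log_divide)
  also have "\<dots> = ln t / ln 2" by (simp add: log_def)
  also have "\<dots> \<le> t powr d / d / ln 2"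
  proof -
    have "d * ln t \<le> t powr d" using ln_bound[of "t powr d"] t d by (simp add: ln_powr)
    hence "ln t \<le> t powr d / d" using d by (simp add: pos_le_divide_eq mult.commute)
    thus ?thesis using divide_right_mono[of "ln t" "t powr d / d" "ln 2"] by simp
  qed
  also have "t powr d / d / ln 2 = r powr (-d) * K" using r by (simp add: t_def K_def powr_minus_divide powr_divide)
  finally have L: "\<bar>log 2 r\<bar> \<le> r powr (-d) * K" .
  have "\<bar>log 2 r\<bar> powr \<xi> \<le> (r powr (-d) * K) powr \<xi>" using L xi by (intro powr_mono2) auto
  also have "\<dots> = r powr (-d * \<xi>) * K powr \<xi>" using r K by (simp add: powr_mult powr_powr)
  finally have A: "\<bar>log 2 r\<bar> powr \<xi> \<le> r powr (-d * \<xi>) * K powr \<xi>" .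
  have "r powr \<epsilon> * \<bar>log 2 r\<bar> powr \<xi> \<le> r powr \<epsilon> * (r powr (-d * \<xi>) * K powr \<xi>)"
    using A by (intro mult_left_mono) auto
  also have "\<dots> = r powr (\<epsilon> - d * \<xi>) * K powr \<xi>" using r by (simp add: powr_add[symmetric])
  also have "\<dots> \<le> 1 * K powr \<xi>"
  proof (intro mult_right_mono)
    have "d * \<xi> \<le> \<epsilon>" using e xi by (simp add: d_def field_simps)
    then show "r powr (\<epsilon> - d * \<xi>) \<le> 1" using r by (intro powr_le1) auto
  qed auto
  finally show ?thesis by (simp add: K_def d_def)
qed


lemma ratio_bounds:
  fixes x y :: nat and n :: int
  assumes "x < y" "{real x..real y} \<subseteq> shell n"
  shows "0 < (real y - real x) / 2 powr real_of_int n \<and> (real y - real x) / 2 powr real_of_int n < 1/2"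
proof (cases "n = -1")
  case True
  have "real y \<in> shell n" using assms by auto
  hence "real y < 1/2" using True by (simp add: shell_def)
  moreover have "real y \<ge> 1" using assms(1) by simp
  ultimately show ?thesis by simp
next
  case False
  have "real x \<in> shell n" "real y \<in> shell n" using assms by auto
  hence h: "2 powr (real_of_int n - 1) \<le> real x" "real y < 2 powr real_of_int n" using False by (auto simp: shell_def)
  have e: "2 powr (real_of_int n - 1) = 2 powr real_of_int n / 2" by (simp add: powr_diff)
  have "real y - real x < 2 powr real_of_int n / 2" using h e by linarith
  hence "(real y - real x) / 2 powr real_of_int n < 1/2" by (simp add: divide_less_eq)
  moreover have "0 < (real y - real x) / 2 powr real_of_int n" using assms(1) by simp
  ultimately show ?thesis by simp
qed

lemma nu_le_nu_log:
  assumes "\<xi> \<ge> 0"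
  shows "nu n \<rho> E \<le> nu_log n \<rho> \<xi> E"
  unfolding nu_def nu_log_def
proof (intro INF_mono bexI)
  fix F assume F: "F \<in> covers n E"
  show "F \<in> covers n E" by fact
  show "ennreal (\<Sum>(x,y)\<in>F. ((real y - real x) / 2 powr real_of_int n) powr \<rho>)
     \<le> ennreal (\<Sum>(x,y)\<in>F. ((real y - real x) / 2 powr real_of_int n) powr \<rho>
                 * \<bar>log 2 ((real y - real x) / 2 powr real_of_int n)\<bar> powr \<xi>)"
  proof (intro ennreal_leI sum_mono)
    fix p assume p: "p \<in> F"
    obtain x y where xy: "p = (x,y)" by force
    have c: "x < y" "{real x..real y} \<subseteq> shell n" using F p xy by (auto simp: covers_def)
    define r where "r = (real y - real x) / 2 powr real_of_int n"
    have r: "0 < r" "r < 1/2" using ratio_bounds[OF c] by (auto simp: r_def)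
    have "log 2 r < log 2 (1/2)" using r by simp
    hence "log 2 r < -1" by (simp add: log_divide)
    hence "1 \<le> \<bar>log 2 r\<bar>" by simp
    hence "1 \<le> \<bar>log 2 r\<bar> powr \<xi>" using assms by (simp add: ge_one_powr_ge_zero)
    hence "r powr \<rho> * 1 \<le> r powr \<rho> * \<bar>log 2 r\<bar> powr \<xi>" by (intro mult_left_mono) auto
    thus "(case p of (x,y) \<Rightarrow> ((real y - real x) / 2 powr real_of_int n) powr \<rho>)
      \<le> (case p of (x,y) \<Rightarrow> ((real y - real x) / 2 powr real_of_int n) powr \<rho>
                 * \<bar>log 2 ((real y - real x) / 2 powr real_of_int n)\<bar> powr \<xi>)"
      by (simp add: xy r_def)
  qed
qed

lemma nu_log_le_nu:
  assumes "\<xi> \<ge> 0" "\<rho> < \<rho>'"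
  defines "C \<equiv> (1 / (((\<rho>' - \<rho>) / (\<xi> + 1)) * ln 2)) powr \<xi>"
  shows "nu_log n \<rho>' \<xi> E \<le> ennreal C * nu n \<rho> E"
proof (cases "covers n E = {}")
  case True
  have "C > 0" using assms by (simp add: C_def)
  thus ?thesis using True by (simp add: nu_def nu_log_def ennreal_mult_top)
next
  case False
  have "nu_log n \<rho>' \<xi> E \<le> (INF F\<in>covers n E. ennreal C *
      ennreal (\<Sum>(x,y)\<in>F. ((real y - real x) / 2 powr real_of_int n) powr \<rho>))"
    unfolding nu_log_def
  proof (intro INF_mono bexI)
    fix F assume F: "F \<in> covers n E"
    show "F \<in> covers n E" by fact
    have "(\<Sum>(x,y)\<in>F. ((real y - real x) / 2 powr real_of_int n) powr \<rho>'
                 * \<bar>log 2 ((real y - real x) / 2 powr real_of_int n)\<bar> powr \<xi>)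
       \<le> (\<Sum>(x,y)\<in>F. C * ((real y - real x) / 2 powr real_of_int n) powr \<rho>)"
      (is "?lhs \<le> _")
    proof (intro sum_mono)
      fix p assume p: "p \<in> F"
      obtain x y where xy: "p = (x,y)" by force
      have c: "x < y" "{real x..real y} \<subseteq> shell n" using F p xy by (auto simp: covers_def)
      define r where "r = (real y - real x) / 2 powr real_of_int n"
      have r: "0 < r" "r < 1/2" using ratio_bounds[OF c] by (auto simp: r_def)
      have b: "r powr (\<rho>' - \<rho>) * \<bar>log 2 r\<bar> powr \<xi> \<le> C"
        unfolding C_def using r assms by (intro log_factor_bound) auto
      have "r powr \<rho>' * \<bar>log 2 r\<bar> powr \<xi> = r powr \<rho> * (r powr (\<rho>' - \<rho>) * \<bar>log 2 r\<bar> powr \<xi>)"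
        using r by (simp add: powr_add[symmetric])
      also have "\<dots> \<le> r powr \<rho> * C" using b by (intro mult_left_mono) auto
      finally show "(case p of (x,y) \<Rightarrow> ((real y - real x) / 2 powr real_of_int n) powr \<rho>'
                 * \<bar>log 2 ((real y - real x) / 2 powr real_of_int n)\<bar> powr \<xi>)
         \<le> (case p of (x,y) \<Rightarrow> C * ((real y - real x) / 2 powr real_of_int n) powr \<rho>)"
        by (simp add: xy r_def mult.commute)
    qed
    also have "\<dots> = C * (\<Sum>(x,y)\<in>F. ((real y - real x) / 2 powr real_of_int n) powr \<rho>)"
      by (simp add: sum_distrib_left case_prod_unfold)
    finally have le: "?lhs \<le> C * (\<Sum>(x,y)\<in>F. ((real y - real x) / 2 powr real_of_int n) powr \<rho>)" .
    show "ennreal (\<Sum>(x,y)\<in>F. ((real y - real x) / 2 powr real_of_int n) powr \<rho>'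
                 * \<bar>log 2 ((real y - real x) / 2 powr real_of_int n)\<bar> powr \<xi>)
       \<le> ennreal C * ennreal (\<Sum>(x,y)\<in>F. ((real y - real x) / 2 powr real_of_int n) powr \<rho>)"
    proof -
      have "0 \<le> C" by (simp add: C_def)
      hence "ennreal C * ennreal (\<Sum>(x,y)\<in>F. ((real y - real x) / 2 powr real_of_int n) powr \<rho>)
         = ennreal (C * (\<Sum>(x,y)\<in>F. ((real y - real x) / 2 powr real_of_int n) powr \<rho>))"
        by (simp add: ennreal_mult')
      thus ?thesis using le by (simp add: ennreal_leI)
    qed
  qed
  also have "\<dots> = ennreal C * nu n \<rho> E"
    unfolding nu_def using False by (intro ennreal_mult_INF_aux[symmetric]) auto
  finally show ?thesis .
qed

theorem lemma3:
  fixes \<xi> :: real and E :: "real set"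
  assumes "\<xi> \<ge> 0" and "E \<subseteq> {0..}"
  shows "macro_dimH E =
    Inf {ereal \<rho> | \<rho>. \<rho> > 0 \<and> (\<Sum>k. nu_log (int k - 1) \<rho> \<xi> E) < \<infinity>}"
proof -
  let ?A = "{ereal \<rho> | \<rho>. \<rho> > 0 \<and> (\<Sum>k. nu (int k - 1) \<rho> E) < \<infinity>}"
  let ?B = "{ereal \<rho> | \<rho>. \<rho> > 0 \<and> (\<Sum>k. nu_log (int k - 1) \<rho> \<xi> E) < \<infinity>}"
  have sub: "?B \<subseteq> ?A"
  proof
    fix z assume "z \<in> ?B"
    then obtain \<rho> where z: "z = ereal \<rho>" "\<rho> > 0" "(\<Sum>k. nu_log (int k - 1) \<rho> \<xi> E) < \<infinity>" by auto
    have "(\<Sum>k. nu (int k - 1) \<rho> E) \<le> (\<Sum>k. nu_log (int k - 1) \<rho> \<xi> E)"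
      using nu_le_nu_log[OF assms(1)] by (intro suminf_le) auto
    thus "z \<in> ?A" using z by (auto intro: le_less_trans)
  qed
  have up: "ereal \<rho>' \<in> ?B" if "ereal \<rho> \<in> ?A" "\<rho> < \<rho>'" for \<rho> \<rho>'
  proof -
    have r: "\<rho> > 0" "(\<Sum>k. nu (int k - 1) \<rho> E) < \<infinity>" using that(1) by auto
    define C where "C = (1 / (((\<rho>' - \<rho>) / (\<xi> + 1)) * ln 2)) powr \<xi>"
    have "(\<Sum>k. nu_log (int k - 1) \<rho>' \<xi> E) \<le> (\<Sum>k. ennreal C * nu (int k - 1) \<rho> E)"
      using nu_log_le_nu[OF assms(1) that(2)] unfolding C_def by (intro suminf_le) auto
    also have "\<dots> = ennreal C * (\<Sum>k. nu (int k - 1) \<rho> E)" by simp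
    also have "\<dots> < \<infinity>" using r(2) by (simp add: ennreal_mult_less_top)
    finally show ?thesis using r(1) that(2) by auto
  qed
  have "Inf ?A \<le> Inf ?B" using sub by (rule Inf_superset_mono)
  moreover have "Inf ?B \<le> Inf ?A"
  proof (rule Inf_greatest)
    fix a assume a: "a \<in> ?A"
    then obtain \<rho> where \<rho>: "a = ereal \<rho>" by auto
    have "Inf ?B \<le> ereal \<rho>'" if "ereal \<rho> < ereal \<rho>'" for \<rho>'
      using up[of \<rho> \<rho>'] a \<rho> that by (auto intro: Inf_lower)
    show "Inf ?B \<le> a" unfolding \<rho>
    proof (rule dense_ge_bounded[of "ereal \<rho>" "ereal (\<rho> + 1)"])
      show "ereal \<rho> < ereal (\<rho> + 1)" by simp
      fix w assume w: "ereal \<rho> < w" "w < ereal (\<rho> + 1)"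
      then obtain r where "w = ereal r" by (cases w) auto
      thus "Inf ?B \<le> w" using w \<open>\<And>\<rho>'. ereal \<rho> < ereal \<rho>' \<Longrightarrow> Inf ?B \<le> ereal \<rho>'\<close> by auto
    qed
  qed
  ultimately show ?thesis unfolding macro_dimH_def by (rule antisym)
qed

end
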